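(* Let $\lambda_1,\lambda_2\in[0,1]$, $\Phi\in\mathbb T$ irrational, $\theta\in\mathbb T$, and suppose $\psi\in\mathscr H_1$ satisfies $W_{\lambda_1,\lambda_2,\Phi,\theta}\psi=z\psi$ for some $z\in\partial\mathbb D$. For $\xi\in\mathbb T$ define the sequence $\varphi^\xi\in\mathbb C^{\mathbb Z}\otimes\mathbb C^2$ by $$\begin{bmatrix}\varphi_n^{\xi,+}\\ \varphi_n^{\xi,-}\end{bmatrix}=\frac{1}{\sqrt2}e^{2\pi in\theta}\begin{bmatrix}1&i\\ i&1\end{bmatrix}\begin{bmatrix}\check\psi^+(n\Phi+\xi)\\ \check\psi^-(n\Phi+\xi)\end{bmatrix},\qquad n\in\mathbb Z,$$ where $\check f(x)=\sum_{n\in\mathbb Z}e^{2\pi inx}f_n$ denotes the inverse Fourier transform (an $L^2(\mathbb T)$ function for $f\in\ell^2(\mathbb Z)$). Then $W^\sharp_{\lambda_1,\lambda_2,\Phi,\xi}\varphi^\xi=z\varphi^\xi$ (as a finite difference equation) for Lebesgue-a.e. $\xi\in\mathbb T$. If moreover $\psi\in\ell^1(\mathbb Z,\mathbb C^2)$, then this holds for every $\xi\in\mathbb T$.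
   Context: Let $\mathbb T=\mathbb R/\mathbb Z$ and $\partial\mathbb D=\{z\in\mathbb C:|z|=1\}$. Let $\mathscr H_1=\ell^2(\mathbb Z)\otimes\mathbb C^2$ with orthonormal basis $\delta_n^{s}=\delta_n\otimes e_s$ ($n\in\mathbb Z$, $s\in\{+,-\}$), $e_+=(1,0)^\top$, $e_-=(0,1)^\top$; write $\psi_n^s=\langle\delta_n^s,\psi\rangle$ and $\psi_n=(\psi_n^+,\psi_n^-)^\top$. For $\lambda\in[0,1]$ put $\lambda'=\sqrt{1-\lambda^2}$ and let $S_\lambda$ be the unitary operator with $S_\lambda\delta_n^\pm=\lambda\delta_{n\pm1}^\pm\pm\lambda'\delta_n^\mp$. For $\lambda_2\in[0,1]$, $\Phi,\theta\in\mathbb T$, $n\in\mathbb Z$ let $$Q_n=Q_{\lambda_2,\Phi,\theta,n}=\begin{bmatrix}\lambda_2\cos(2\pi(n\Phi+\theta))+i\lambda_2' & -\lambda_2\sin(2\pi(n\Phi+\theta))\\ \lambda_2\sin(2\pi(n\Phi+\theta)) & \lambda_2\cos(2\pi(n\Phi+\theta))-i\lambda_2'\end{bmatrix},$$ and let $Q_{\lambda_2,\Phi,\theta}$ act by $(Q\psi)_n=Q_n\psi_n$. The unitary almost-Mathieu operator is $W_{\lambda_1,\lambda_2,\Phi,\theta}=S_{\lambda_1}Q_{\lambda_2,\Phi,\theta}$ on $\mathscr H_1$, for $\lambda_1,\lambda_2\in[0,1]$. Transposes are taken with respect to the basis $\{\delta_n^s\}$. For a walk $W=S_\lambda Q$ with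 coins $Q_n=(q_n^{jk})_{j,k=1,2}$, the transpose acts (on arbitrary sequences, as a finite difference operator) by $[W^\top\psi]_n^+=q_n^{11}(\lambda\psi_{n+1}^++\lambda'\psi_n^-)+q_n^{21}(-\lambda'\psi_n^++\lambda\psi_{n-1}^-)$ and $[W^\top\psi]_n^-=q_n^{12}(\lambda\psi_{n+1}^++\lambda'\psi_n^-)+q_n^{22}(-\lambda'\psi_n^++\lambda\psi_{n-1}^-)$. The dual operator is $W^\sharp_{\lambda_1,\lambda_2,\Phi,\theta}:=W^\top_{\lambda_2,\lambda_1,\Phi,\theta}$ (note the exchange of $\lambda_1$ and $\lambda_2$). *)

theory Defs
  imports "HOL-Analysis.Analysis"
begin

text \<open>Vectors in C^2 are pairs: fst = (+)-component, snd = (-)-component.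
  Elements of l^2(Z) (x) C^2 (and arbitrary sequences) are maps int => complex * complex.\<close>

definition lamc :: "real \<Rightarrow> real" where
  "lamc l = sqrt (1 - l\<^sup>2)"

definition coin :: "real \<Rightarrow> real \<Rightarrow> real \<Rightarrow> int \<Rightarrow> nat \<Rightarrow> nat \<Rightarrow> complex" where
  "coin l2 Phi th n j k =
     (let c = complex_of_real (l2 * cos (2 * pi * (of_int n * Phi + th)));
          s = complex_of_real (l2 * sin (2 * pi * (of_int n * Phi + th)));
          d = \<i> * complex_of_real (lamc l2)
      in if j = 1 \<and> k = 1 then c + d
         else if j = 1 \<and> k = 2 then - s
         else if j = 2 \<and> k = 1 then s
         else c - d)"

text \<open>Shift S_l acting on sequences: S_l delta_n^+ = l delta_{n+1}^+ + l' delta_n^-,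
  S_l delta_n^- = l delta_{n-1}^- - l' delta_n^+.\<close>
definition shift_op :: "real \<Rightarrow> (int \<Rightarrow> complex \<times> complex) \<Rightarrow> int \<Rightarrow> complex \<times> complex" where
  "shift_op l psi n =
     (of_real l * fst (psi (n - 1)) - of_real (lamc l) * snd (psi n),
      of_real (lamc l) * fst (psi n) + of_real l * snd (psi (n + 1)))"

definition coin_op :: "(int \<Rightarrow> nat \<Rightarrow> nat \<Rightarrow> complex) \<Rightarrow> (int \<Rightarrow> complex \<times> complex) \<Rightarrow> int \<Rightarrow> complex \<times> complex" where
  "coin_op q psi n =
     (q n 1 1 * fst (psi n) + q n 1 2 * snd (psi n),
      q n 2 1 * fst (psi n) + q n 2 2 * snd (psi n))"

definition UAMO :: "real \<Rightarrow> real \<Rightarrow> real \<Rightarrow> real \<Rightarrow> (int \<Rightarrow> complex \<times> complex) \<Rightarrow> int \<Rightarrow> complex \<times> complex" where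
  "UAMO l1 l2 Phi th psi = shift_op l1 (coin_op (coin l2 Phi th) psi)"

text \<open>Transpose of the walk S_l Q (Q with entries q), as a finite difference operator.\<close>
definition walk_transpose :: "real \<Rightarrow> (int \<Rightarrow> nat \<Rightarrow> nat \<Rightarrow> complex) \<Rightarrow> (int \<Rightarrow> complex \<times> complex) \<Rightarrow> int \<Rightarrow> complex \<times> complex" where
  "walk_transpose l q psi n =
     (let a = of_real l * fst (psi (n + 1)) + of_real (lamc l) * snd (psi n);
          b = - of_real (lamc l) * fst (psi n) + of_real l * snd (psi (n - 1))
      in (q n 1 1 * a + q n 2 1 * b, q n 1 2 * a + q n 2 2 * b))"

text \<open>Dual operator W^sharp_{l1,l2,Phi,th} = (W_{l2,l1,Phi,th})^T.\<close>
definition UAMO_dual :: "real \<Rightarrow> real \<Rightarrow> real \<Rightarrow> real \<Rightarrow> (int \<Rightarrow> complex \<times> complex) \<Rightarrow> int \<Rightarrow> complex \<times> complex" where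
  "UAMO_dual l1 l2 Phi th = walk_transpose l2 (coin l1 Phi th)"

definition in_l2 :: "(int \<Rightarrow> complex \<times> complex) \<Rightarrow> bool" where
  "in_l2 psi \<longleftrightarrow> (\<lambda>n. (cmod (fst (psi n)))\<^sup>2 + (cmod (snd (psi n)))\<^sup>2) summable_on UNIV"

definition in_l1 :: "(int \<Rightarrow> complex \<times> complex) \<Rightarrow> bool" where
  "in_l1 psi \<longleftrightarrow> (\<lambda>n. cmod (fst (psi n)) + cmod (snd (psi n))) summable_on UNIV"

text \<open>g : R -> C (a 1-periodic function, i.e. a function on T) is a representative of the
  L^2(T) inverse Fourier transform of f in l^2(Z): g is measurable, 1-periodic and the
  partial sums sum_{|n|<=N} e^{2 pi i n x} f_n converge to g in L^2([0,1]).\<close>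
definition is_inv_fourier_L2 :: "(int \<Rightarrow> complex) \<Rightarrow> (real \<Rightarrow> complex) \<Rightarrow> bool" where
  "is_inv_fourier_L2 f g \<longleftrightarrow>
     g \<in> borel_measurable lborel \<and> (\<forall>x. g (x + 1) = g x) \<and>
     ((\<lambda>N::nat. \<integral>\<^sup>+ x \<in> {0..1}.
         ennreal ((cmod (g x - (\<Sum>n\<in>{- int N..int N}. cis (2 * pi * of_int n * x) * f n)))\<^sup>2) \<partial>lborel)
      \<longlonglongrightarrow> 0)"

text \<open>Pointwise inverse Fourier transform (used for f in l^1(Z), where the series converges absolutely).\<close>
definition inv_fourier :: "(int \<Rightarrow> complex) \<Rightarrow> real \<Rightarrow> complex" where
  "inv_fourier f x = (\<Sum>\<^sub>\<infinity>n\<in>UNIV. cis (2 * pi * of_int n * x) * f n)"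

text \<open>The sequence phi^xi built from functions gp, gm (standing for psi-check^+, psi-check^-).\<close>
definition phi_seq :: "real \<Rightarrow> real \<Rightarrow> (real \<Rightarrow> complex) \<Rightarrow> (real \<Rightarrow> complex) \<Rightarrow> real \<Rightarrow> int \<Rightarrow> complex \<times> complex" where
  "phi_seq Phi th gp gm xi n =
     (let c = cis (2 * pi * of_int n * th) / complex_of_real (sqrt 2);
          a = gp (of_int n * Phi + xi); b = gm (of_int n * Phi + xi)
      in (c * (a + \<i> * b), c * (\<i> * a + b)))"

end

theory Submission
  imports Defs
begin


definition Up :: "real \<Rightarrow> real \<Rightarrow> real \<Rightarrow> (real \<Rightarrow> complex) \<Rightarrow> (real \<Rightarrow> complex) \<Rightarrow> real \<Rightarrow> complex" where
 "Up l2 Phi th gp gm x = (let t = cis (2*pi*th) in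
    of_real l2 * ((t * gp (x+Phi) + inverse t * gp (x-Phi))/2)
  - of_real l2 * ((t * gm (x+Phi) - inverse t * gm (x-Phi))/(2*\<i>))
  + \<i> * of_real (lamc l2) * gp x)"
definition Um :: "real \<Rightarrow> real \<Rightarrow> real \<Rightarrow> (real \<Rightarrow> complex) \<Rightarrow> (real \<Rightarrow> complex) \<Rightarrow> real \<Rightarrow> complex" where
 "Um l2 Phi th gp gm x = (let t = cis (2*pi*th) in
    of_real l2 * ((t * gp (x+Phi) - inverse t * gp (x-Phi))/(2*\<i>))
  + of_real l2 * ((t * gm (x+Phi) + inverse t * gm (x-Phi))/2)
  - \<i> * of_real (lamc l2) * gm x)"
definition Ep where
 "Ep l1 l2 Phi th z gp gm x = of_real l1 * cis (2*pi*x) * Up l2 Phi th gp gm x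
     - of_real (lamc l1) * Um l2 Phi th gp gm x - z * gp x"
definition Em where
 "Em l1 l2 Phi th z gp gm x = of_real (lamc l1) * Up l2 Phi th gp gm x
     + of_real l1 * cis (-(2*pi*x)) * Um l2 Phi th gp gm x - z * gm x"

lemma cos_cis: "complex_of_real (cos y) = (cis y + inverse (cis y))/2"
  by (simp add: cis_inverse cos_of_real complex_eq_iff)
lemma sin_cis: "complex_of_real (sin y) = (cis y - inverse (cis y))/(2*\<i>)"
  by (simp add: cis_inverse complex_eq_iff)

lemma lemA:
  fixes gp gm :: "real \<Rightarrow> complex"
  assumes that: "x = of_int n * Phi + xi"
  shows "UAMO_dual l1 l2 Phi xi (phi_seq Phi th gp gm xi) n =
     (z * fst (phi_seq Phi th gp gm xi n) + cis (2*pi* of_int n*th) / of_real (sqrt 2) * (Ep l1 l2 Phi th z gp gm x + \<i> * Em l1 l2 Phi th z gp gm x),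
      z * snd (phi_seq Phi th gp gm xi n) + cis (2*pi* of_int n*th) / of_real (sqrt 2) * (\<i> * Ep l1 l2 Phi th z gp gm x + Em l1 l2 Phi th z gp gm x))"
proof -
  have e1: "of_int (n+1) * Phi + xi = x + Phi" "of_int (n-1) * Phi + xi = x - Phi" "of_int n * Phi + xi = x"
    by (simp_all add: that algebra_simps)
  have e2: "2 * pi * of_int (n+1) * th = 2*pi* of_int n*th + 2*pi*th"
     "2 * pi * of_int (n-1) * th = 2*pi* of_int n*th - 2*pi*th"
    by (simp_all add: algebra_simps)
  have e3: "2 * pi * (of_int n * Phi + xi) = 2*pi*x" by (simp add: that)
  define a where "a = cis (2*pi*x)"
  define t where "t = cis (2*pi*th)"
  define s where "s = cis (2*pi* of_int n*th)"
  have a0: "a \<noteq> 0" and t0: "t \<noteq> 0" and s0: "s \<noteq> 0" by (simp_all add: a_def t_def s_def)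
  have c1: "cis (2*pi* of_int n*th + 2*pi*th) = s * t" "cis (2*pi* of_int n*th - 2*pi*th) = s / t"
    by (simp_all add: s_def t_def cis_mult cis_divide)
  have c2: "cis (- (2*pi*x)) = inverse a" by (simp add: a_def cis_inverse)
  have sq: "complex_of_real (sqrt 2) \<noteq> 0" by simp
  show ?thesis
    unfolding UAMO_dual_def walk_transpose_def coin_def phi_seq_def Let_def Ep_def Em_def Up_def Um_def
    apply (simp only: e1 e2 e3 c1 c2 of_real_mult cos_cis sin_cis of_real_1 fst_conv snd_conv)
    apply (simp only: a_def[symmetric] t_def[symmetric] s_def[symmetric] c2)
    using a0 t0 s0 sq
    apply (simp add: field_simps prod_eq_iff)

    done
qed



definition lone :: "(int \<Rightarrow> complex) \<Rightarrow> bool" where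
  "lone a \<longleftrightarrow> (\<lambda>n. norm (a n)) summable_on UNIV"

lemma lone_summ: "lone a \<Longrightarrow> (\<lambda>n. cis (2 * pi * of_int n * x) * a n) summable_on UNIV"
  unfolding lone_def
  by (rule abs_summable_summable, rule Infinite_Sum.abs_summable_on_comparison_test'[where g="\<lambda>n. norm (a n)"])
     (auto simp: norm_mult)

lemma lone_mult: assumes "lone a" "\<And>n. norm (c n) \<le> K" shows "lone (\<lambda>n. c n * a n)"
proof -
  have "(\<lambda>n. K * norm (a n)) summable_on UNIV" using assms(1) unfolding lone_def
    by (rule summable_on_cmult_right)
  then show ?thesis unfolding lone_def
    by (rule summable_on_comparison_test) (auto simp: norm_mult intro!: mult_right_mono assms(2))
qed

lemma lone_cmult: "lone a \<Longrightarrow> lone (\<lambda>n. c * a n)"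
  by (rule lone_mult[where K="norm c"]) auto

lemma lone_add: assumes "lone a" "lone b" shows "lone (\<lambda>n. a n + b n)"
proof -
  have "(\<lambda>n. norm (a n) + norm (b n)) summable_on UNIV" using assms unfolding lone_def
    by (rule summable_on_add)
  then show ?thesis unfolding lone_def
    by (rule summable_on_comparison_test) (auto simp: norm_triangle_ineq)
qed

lemma lone_diff: assumes "lone a" "lone b" shows "lone (\<lambda>n. a n - b n)"
  using lone_add[OF assms(1) lone_cmult[OF assms(2), of "-1"]] by simp

lemma lone_shift: assumes "lone a" shows "lone (\<lambda>n. a (n + k))"
proof -
  have "bij_betw (\<lambda>n. n + k) UNIV UNIV"
    by (rule bij_betwI[where g="\<lambda>n. n - k"]) auto
  then show ?thesis using assms unfolding lone_def
    using summable_on_reindex_bij_betw[of "\<lambda>n. n + k" UNIV UNIV "\<lambda>n. norm (a n)"] by simp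
qed

lemma IF_add: assumes "lone a" "lone b" shows "inv_fourier (\<lambda>n. a n + b n) x = inv_fourier a x + inv_fourier b x"
  unfolding inv_fourier_def
  using infsum_add[OF lone_summ[OF assms(1), of x] lone_summ[OF assms(2), of x]] by (simp add: distrib_left)

lemma IF_cmult: "inv_fourier (\<lambda>n. c * a n) x = c * inv_fourier a x"
  unfolding inv_fourier_def
  by (subst infsum_cmult_right'[symmetric]) (simp add: algebra_simps)

lemma IF_diff: assumes "lone a" "lone b" shows "inv_fourier (\<lambda>n. a n - b n) x = inv_fourier a x - inv_fourier b x"
  using IF_add[OF assms(1) lone_cmult[OF assms(2), of "-1"], of x] IF_cmult[of "-1" b x] by simp

lemma IF_mod: "inv_fourier (\<lambda>n. cis (2 * pi * of_int n * c) * a n) x = inv_fourier a (x + c)"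
  unfolding inv_fourier_def
proof (rule infsum_cong)
  fix n :: int
  have "cis (2 * pi * of_int n * (x + c)) = cis (2 * pi * of_int n * x) * cis (2 * pi * of_int n * c)"
    by (simp add: cis_mult distrib_left)
  then show "cis (2 * pi * of_int n * x) * (cis (2 * pi * of_int n * c) * a n) = cis (2 * pi * of_int n * (x + c)) * a n"
    by simp
qed

lemma IF_shift: "inv_fourier (\<lambda>n. a (n + k)) x = cis (- 2 * pi * of_int k * x) * inv_fourier a x"
proof -
  have b: "bij_betw (\<lambda>n. n + k) UNIV UNIV"
    by (rule bij_betwI[where g="\<lambda>n. n - k"]) auto
  have "inv_fourier (\<lambda>n. a (n + k)) x = (\<Sum>\<^sub>\<infinity>n\<in>UNIV. (\<lambda>m. cis (- 2 * pi * of_int k * x) * (cis (2 * pi * of_int m * x) * a m)) (n + k))"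
    unfolding inv_fourier_def
  proof (rule infsum_cong)
    fix n :: int
    have "cis (2 * pi * of_int n * x) = cis (- 2 * pi * of_int k * x) * cis (2 * pi * of_int (n + k) * x)"
      by (simp add: cis_mult algebra_simps)
    then show "cis (2 * pi * of_int n * x) * a (n + k) = cis (- 2 * pi * of_int k * x) * (cis (2 * pi * of_int (n + k) * x) * a (n + k))"
      by simp
  qed
  also have "\<dots> = (\<Sum>\<^sub>\<infinity>m\<in>UNIV. cis (- 2 * pi * of_int k * x) * (cis (2 * pi * of_int m * x) * a m))"
    by (rule infsum_reindex_bij_betw[OF b])
  also have "\<dots> = cis (- 2 * pi * of_int k * x) * inv_fourier a x"
    unfolding inv_fourier_def by (rule infsum_cmult_right')
  finally show ?thesis .
qed


definition comb :: "real \<Rightarrow> complex \<Rightarrow> complex \<Rightarrow> complex \<Rightarrow> complex \<Rightarrow> complex \<Rightarrow> complex \<Rightarrow> (int \<Rightarrow> complex) \<Rightarrow> (int \<Rightarrow> complex) \<Rightarrow> int \<Rightarrow> complex" where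
  "comb Phi A1 A2 A3 A4 A5 A6 f g n =
     A1 * (cis (2 * pi * of_int n * Phi) * f n) + A2 * (cis (2 * pi * of_int n * (- Phi)) * f n) + A3 * f n
   + A4 * (cis (2 * pi * of_int n * Phi) * g n) + A5 * (cis (2 * pi * of_int n * (- Phi)) * g n) + A6 * g n"

lemma lone_cis: "lone f \<Longrightarrow> lone (\<lambda>n. cis (2 * pi * of_int n * c) * f n)"
  by (rule lone_mult[where K=1]) auto

lemma comb_lone: assumes "lone f" "lone g" shows "lone (comb Phi A1 A2 A3 A4 A5 A6 f g)"
  unfolding comb_def
  by (intro lone_add lone_cmult lone_cis assms)

lemma comb_IF: assumes f: "lone f" and g: "lone g"
  shows "inv_fourier (comb Phi A1 A2 A3 A4 A5 A6 f g) x =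
    A1 * inv_fourier f (x + Phi) + A2 * inv_fourier f (x - Phi) + A3 * inv_fourier f x
  + A4 * inv_fourier g (x + Phi) + A5 * inv_fourier g (x - Phi) + A6 * inv_fourier g x"
  unfolding comb_def
  apply (subst IF_add, (intro lone_add lone_cmult lone_cis f g)+)+
  apply (simp only: IF_cmult IF_mod)
  apply simp
  done


lemma coin_cis: "cis (2 * pi * (of_int n * Phi + th)) = cis (2 * pi * of_int n * Phi) * cis (2 * pi * th)"
  by (simp add: cis_mult distrib_left mult.assoc)

lemma uplus_comb:
  "coin l2 Phi th n 1 1 * f n + coin l2 Phi th n 1 2 * g n =
   comb Phi (of_real l2 * cis (2*pi*th) / 2) (of_real l2 / (2 * cis (2*pi*th))) (\<i> * of_real (lamc l2))
            (- of_real l2 * cis (2*pi*th) / (2*\<i>)) (of_real l2 / (2 * \<i> * cis (2*pi*th))) 0 f g n"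
proof -
  have i: "cis (2 * pi * of_int n * (- Phi)) = inverse (cis (2 * pi * of_int n * Phi))"
    by (simp add: cis_inverse)
  have nz: "cis (2 * pi * of_int n * Phi) \<noteq> 0" "cis (2*pi*th) \<noteq> 0" by auto
  show ?thesis
    unfolding coin_def comb_def Let_def
    apply (simp only: of_real_mult cos_cis sin_cis coin_cis i inverse_mult_distrib)
    using nz by (simp add: field_simps)
qed

lemma uminus_comb:
  "coin l2 Phi th n 2 1 * f n + coin l2 Phi th n 2 2 * g n =
   comb Phi (of_real l2 * cis (2*pi*th) / (2*\<i>)) (- of_real l2 / (2 * \<i> * cis (2*pi*th))) 0
            (of_real l2 * cis (2*pi*th) / 2) (of_real l2 / (2 * cis (2*pi*th))) (- \<i> * of_real (lamc l2)) f g n"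
proof -
  have i: "cis (2 * pi * of_int n * (- Phi)) = inverse (cis (2 * pi * of_int n * Phi))"
    by (simp add: cis_inverse)
  have nz: "cis (2 * pi * of_int n * Phi) \<noteq> 0" "cis (2*pi*th) \<noteq> 0" by auto
  show ?thesis
    unfolding coin_def comb_def Let_def
    apply (simp only: of_real_mult cos_cis sin_cis coin_cis i inverse_mult_distrib)
    using nz by (simp add: field_simps)
qed

lemma lemB:
  fixes psi :: "int \<Rightarrow> complex \<times> complex"
  assumes f: "lone (\<lambda>n. fst (psi n))" and g: "lone (\<lambda>n. snd (psi n))"
  shows "Ep l1 l2 Phi th z (inv_fourier (\<lambda>n. fst (psi n))) (inv_fourier (\<lambda>n. snd (psi n))) x
           = inv_fourier (\<lambda>n. fst (UAMO l1 l2 Phi th psi n) - z * fst (psi n)) x"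
    and "Em l1 l2 Phi th z (inv_fourier (\<lambda>n. fst (psi n))) (inv_fourier (\<lambda>n. snd (psi n))) x
           = inv_fourier (\<lambda>n. snd (UAMO l1 l2 Phi th psi n) - z * snd (psi n)) x"
proof -
  define F where "F = (\<lambda>n. fst (psi n))"
  define G where "G = (\<lambda>n. snd (psi n))"
  define t where "t = cis (2*pi*th)"
  have t0: "t \<noteq> 0" by (simp add: t_def)
  define up where "up = comb Phi (of_real l2 * t / 2) (of_real l2 / (2 * t)) (\<i> * of_real (lamc l2))
            (- of_real l2 * t / (2*\<i>)) (of_real l2 / (2 * \<i> * t)) 0 F G"
  define um where "um = comb Phi (of_real l2 * t / (2*\<i>)) (- of_real l2 / (2 * \<i> * t)) 0
            (of_real l2 * t / 2) (of_real l2 / (2 * t)) (- \<i> * of_real (lamc l2)) F G"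
  have f': "lone F" and g': "lone G" using f g by (simp_all add: F_def G_def)
  have lup: "lone up" and lum: "lone um" unfolding up_def um_def by (intro comb_lone f' g')+
  have co: "coin_op (coin l2 Phi th) psi n = (up n, um n)" for n
    unfolding coin_op_def up_def um_def t_def F_def G_def
    using uplus_comb[of l2 Phi th n F G] uminus_comb[of l2 Phi th n F G] by (simp add: F_def G_def)
  have W: "UAMO l1 l2 Phi th psi n = (of_real l1 * up (n + -1) - of_real (lamc l1) * um n,
              of_real (lamc l1) * up n + of_real l1 * um (n + 1))" for n
    unfolding UAMO_def shift_op_def co by simp
  have IFup: "inv_fourier up y = Up l2 Phi th (inv_fourier F) (inv_fourier G) y" for y
    unfolding up_def Up_def Let_def t_def[symmetric]
    using t0 by (simp add: comb_IF[OF f' g'] field_simps)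
  have IFum: "inv_fourier um y = Um l2 Phi th (inv_fourier F) (inv_fourier G) y" for y
    unfolding um_def Um_def Let_def t_def[symmetric]
    using t0 by (simp add: comb_IF[OF f' g'] field_simps)
  have "inv_fourier (\<lambda>n. fst (UAMO l1 l2 Phi th psi n) - z * F n) x
     = inv_fourier (\<lambda>n. (of_real l1 * up (n + -1) - of_real (lamc l1) * um n) - z * F n) x"
    by (simp add: W)
  also have "\<dots> = of_real l1 * (cis (2*pi*x) * inv_fourier up x) - of_real (lamc l1) * inv_fourier um x - z * inv_fourier F x"
  proof -
    have L1: "lone (\<lambda>n. of_real l1 * up (n + -1))" by (intro lone_cmult lone_shift lup)
    have s1: "inv_fourier (\<lambda>n. up (n + -1)) x = cis (2*pi*x) * inv_fourier up x"
      using IF_shift[of up "-1" x] by simp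
    show ?thesis
      by (subst IF_diff[OF lone_diff[OF L1 lone_cmult[OF lum]] lone_cmult[OF f']],
          subst IF_diff[OF L1 lone_cmult[OF lum]], simp only: IF_cmult s1)
  qed
  finally show "Ep l1 l2 Phi th z (inv_fourier (\<lambda>n. fst (psi n))) (inv_fourier (\<lambda>n. snd (psi n))) x
           = inv_fourier (\<lambda>n. fst (UAMO l1 l2 Phi th psi n) - z * fst (psi n)) x"
    unfolding Ep_def F_def[symmetric] G_def[symmetric] IFup IFum by (simp add: algebra_simps F_def G_def)
  have "inv_fourier (\<lambda>n. snd (UAMO l1 l2 Phi th psi n) - z * G n) x
     = inv_fourier (\<lambda>n. (of_real (lamc l1) * up n + of_real l1 * um (n + 1)) - z * G n) x"
    by (simp add: W)
  also have "\<dots> = of_real (lamc l1) * inv_fourier up x + of_real l1 * (cis (- (2*pi*x)) * inv_fourier um x) - z * inv_fourier G x"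
    by (simp add: IF_diff IF_add lone_add lone_diff lone_cmult lone_shift lup lum g' IF_cmult IF_shift)
  finally show "Em l1 l2 Phi th z (inv_fourier (\<lambda>n. fst (psi n))) (inv_fourier (\<lambda>n. snd (psi n))) x
           = inv_fourier (\<lambda>n. snd (UAMO l1 l2 Phi th psi n) - z * snd (psi n)) x"
    unfolding Em_def F_def[symmetric] G_def[symmetric] IFup IFum by (simp add: algebra_simps F_def G_def)
qed



lemma per_int:
  assumes hp: "\<And>x. h (x + 1) = h x"
  shows "h (x + of_int k) = h x"
proof (induction k arbitrary: x rule: int_induct[where k=0])
  case base then show ?case by simp
next
  case (step1 i) then show ?case using hp[of "x + of_int i"] by (simp add: algebra_simps)
next
  case (step2 i) then show ?case using hp[of "x + of_int (i - 1)"] by (simp add: algebra_simps)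
qed

lemma per_shift_le:
  fixes h :: "real \<Rightarrow> ennreal" and R c :: real
  assumes hm: "h \<in> borel_measurable borel" and hp: "\<And>x. h (x + 1) = h x"
  shows "(\<integral>\<^sup>+x. h (x + c) * indicator {-R..R} x \<partial>lborel)
           \<le> of_nat (2 * (nat \<lceil>\<bar>R\<bar> + \<bar>c\<bar>\<rceil> + 1) + 1) * (\<integral>\<^sup>+x. h x * indicator {0..1} x \<partial>lborel)"
proof -
  define M where "M = nat \<lceil>\<bar>R\<bar> + \<bar>c\<bar>\<rceil> + 1"
  define f where "f y = h y * indicator {c - R..c + R} y" for y
  have fm: "f \<in> borel_measurable borel" unfolding f_def using hm by measurable
  have "(\<integral>\<^sup>+x. h (x + c) * indicator {-R..R} x \<partial>lborel) = (\<integral>\<^sup>+x. f (c + 1 * x) \<partial>lborel)"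
    by (rule nn_integral_cong) (auto simp: f_def indicator_def add.commute)
  also have "\<dots> = (\<integral>\<^sup>+x. f x \<partial>lborel)"
    using nn_integral_real_affine[OF fm, of 1 c] by simp
  also have "\<dots> \<le> (\<integral>\<^sup>+y. (\<Sum>k\<in>{- int M..int M}. h y * indicator {real_of_int k..real_of_int k + 1} y) \<partial>lborel)"
  proof (rule nn_integral_mono)
    fix y :: real
    show "f y \<le> (\<Sum>k\<in>{- int M..int M}. h y * indicator {real_of_int k..real_of_int k + 1} y)"
    proof (cases "y \<in> {c - R..c + R}")
      case False then show ?thesis by (simp add: f_def)
    next
      case True
      define k where "k = \<lfloor>y\<rfloor>"
      have "\<bar>y\<bar> \<le> \<bar>R\<bar> + \<bar>c\<bar>" using True by auto
      then have "\<bar>y\<bar> \<le> real M - 1" unfolding M_def by linarith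
      then have kin: "k \<in> {- int M..int M}" unfolding k_def by (auto, linarith+)
      have "y \<in> {real_of_int k..real_of_int k + 1}" unfolding k_def by auto
      then have "f y \<le> h y * indicator {real_of_int k..real_of_int k + 1} y"
        by (simp add: f_def indicator_def)
      also have "\<dots> \<le> (\<Sum>k\<in>{- int M..int M}. h y * indicator {real_of_int k..real_of_int k + 1} y)"
        by (rule member_le_sum[OF kin]) auto
      finally show ?thesis .
    qed
  qed
  also have "\<dots> = (\<Sum>k\<in>{- int M..int M}. \<integral>\<^sup>+y. h y * indicator {real_of_int k..real_of_int k + 1} y \<partial>lborel)"
    by (rule nn_integral_sum) (use hm in measurable)
  also have "\<dots> = (\<Sum>k\<in>{- int M..int M}. \<integral>\<^sup>+x. h x * indicator {0..1} x \<partial>lborel)"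
  proof (rule sum.cong[OF refl])
    fix k :: int
    have m: "(\<lambda>y. h y * indicator {real_of_int k..real_of_int k + 1} y) \<in> borel_measurable borel"
      using hm by measurable
    have "(\<integral>\<^sup>+y. h y * indicator {real_of_int k..real_of_int k + 1} y \<partial>lborel)
        = (\<integral>\<^sup>+x. h (real_of_int k + 1 * x) * indicator {real_of_int k..real_of_int k + 1} (real_of_int k + 1 * x) \<partial>lborel)"
      using nn_integral_real_affine[OF m, of 1 "real_of_int k"] by simp
    also have "\<dots> = (\<integral>\<^sup>+x. h x * indicator {0..1} x \<partial>lborel)"
      by (rule nn_integral_cong) (simp add: per_int[of h, OF hp] add.commute indicator_def)
    finally show "(\<integral>\<^sup>+y. h y * indicator {real_of_int k..real_of_int k + 1} y \<partial>lborel) = (\<integral>\<^sup>+x. h x * indicator {0..1} x \<partial>lborel)" .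
  qed
  also have "\<dots> = of_nat (2 * M + 1) * (\<integral>\<^sup>+x. h x * indicator {0..1} x \<partial>lborel)"
  proof -
    have "card {- int M..int M} = 2 * M + 1" by simp
    then show ?thesis by simp
  qed
  finally show ?thesis unfolding M_def .
qed


lemma sq_tri: "(a + b)\<^sup>2 \<le> 2 * a\<^sup>2 + 2 * (b::real)\<^sup>2"
proof -
  have "(a + b)\<^sup>2 + (a - b)\<^sup>2 = 2 * a\<^sup>2 + 2 * b\<^sup>2" by (simp add: power2_eq_square algebra_simps)
  moreover have "0 \<le> (a - b)\<^sup>2" by simp
  ultimately show ?thesis by linarith
qed

lemma shift_meas:
  fixes D :: "real \<Rightarrow> 'b::topological_space" and c :: real
  assumes "D \<in> borel_measurable borel" shows "(\<lambda>x. D (x + c)) \<in> borel_measurable borel"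
proof -
  have "(\<lambda>x::real. x + c) \<in> borel_measurable borel" by simp
  from measurable_compose[OF this assms] show ?thesis by (simp add: o_def)
qed

lemma lemC:
  fixes Fg :: "real \<Rightarrow> complex" and Fs :: "nat \<Rightarrow> real \<Rightarrow> complex" and D :: "nat \<Rightarrow> nat \<Rightarrow> real \<Rightarrow> complex"
    and c :: "nat \<Rightarrow> real" and I :: "nat set" and K :: real and \<delta> :: "nat \<Rightarrow> real"
  assumes I: "finite I" and Fgm: "Fg \<in> borel_measurable borel"
    and Dm: "\<And>i N. i \<in> I \<Longrightarrow> D i N \<in> borel_measurable borel"
    and Dp: "\<And>i N x. i \<in> I \<Longrightarrow> D i N (x + 1) = D i N x"
    and Dl: "\<And>i. i \<in> I \<Longrightarrow> (\<lambda>N. \<integral>\<^sup>+x. ennreal ((cmod (D i N x))\<^sup>2) * indicator {0..1} x \<partial>lborel) \<longlonglongrightarrow> 0"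
    and bd: "\<And>N x. cmod (Fg x - Fs N x) \<le> K * (\<Sum>i\<in>I. cmod (D i N (x + c i)))"
    and sb: "\<And>N x. cmod (Fs N x) \<le> \<delta> N" and dl: "\<delta> \<longlonglongrightarrow> 0"
  shows "AE x in lborel. Fg x = 0"
proof -
  define n where "n = card I"
  have pw: "(cmod (Fg x))\<^sup>2 \<le> 2 * K\<^sup>2 * real n * (\<Sum>i\<in>I. (cmod (D i N (x + c i)))\<^sup>2) + 2 * (\<delta> N)\<^sup>2" for N x
  proof -
    define a where "a = cmod (Fg x - Fs N x)"
    define b where "b = cmod (Fs N x)"
    define s where "s = (\<Sum>i\<in>I. cmod (D i N (x + c i)))"
    have "cmod (Fg x) \<le> a + b" unfolding a_def b_def using norm_triangle_sub[of "Fg x" "Fs N x"] by simp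
    then have "(cmod (Fg x))\<^sup>2 \<le> (a + b)\<^sup>2" by (rule power_mono) simp
    also have "\<dots> \<le> 2 * a\<^sup>2 + 2 * b\<^sup>2" by (rule sq_tri)
    finally have h1: "(cmod (Fg x))\<^sup>2 \<le> 2 * a\<^sup>2 + 2 * b\<^sup>2" .
    have "a\<^sup>2 \<le> (K * s)\<^sup>2" unfolding a_def s_def by (rule power_mono[OF bd]) simp
    then have h2: "a\<^sup>2 \<le> K\<^sup>2 * s\<^sup>2" by (simp add: power_mult_distrib)
    have h3: "s\<^sup>2 \<le> (\<Sum>i\<in>I. (cmod (D i N (x + c i)))\<^sup>2) * real n"
      unfolding s_def n_def by (rule sum_squared_le_sum_of_squares)
    have h4: "K\<^sup>2 * s\<^sup>2 \<le> K\<^sup>2 * ((\<Sum>i\<in>I. (cmod (D i N (x + c i)))\<^sup>2) * real n)"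
      by (rule mult_left_mono[OF h3]) simp
    have h5: "b\<^sup>2 \<le> (\<delta> N)\<^sup>2" unfolding b_def by (rule power_mono[OF sb]) simp
    have h6: "2 * K\<^sup>2 * real n * (\<Sum>i\<in>I. (cmod (D i N (x + c i)))\<^sup>2) = 2 * (K\<^sup>2 * ((\<Sum>i\<in>I. (cmod (D i N (x + c i)))\<^sup>2) * real n))"
      by (simp only: mult.assoc mult.commute mult.left_commute)
    show ?thesis unfolding h6 using h1 h2 h4 h5 by linarith
  qed
  have Dsm: "(\<lambda>x. ennreal ((cmod (D i N (x + c i)))\<^sup>2)) \<in> borel_measurable borel" if "i \<in> I" for i N
    using shift_meas[OF Dm[OF that, of N], of "c i"] by measurable
  have J0: "(\<integral>\<^sup>+x. ennreal ((cmod (Fg x))\<^sup>2) * indicator {- real R..real R} x \<partial>lborel) = 0" for R :: nat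
  proof -
    define J where "J = (\<integral>\<^sup>+x. ennreal ((cmod (Fg x))\<^sup>2) * indicator {- real R..real R} x \<partial>lborel)"
    define M where "M i = nat \<lceil>\<bar>real R\<bar> + \<bar>c i\<bar>\<rceil> + 1" for i
    define JD where "JD i N = (\<integral>\<^sup>+x. ennreal ((cmod (D i N x))\<^sup>2) * indicator {0..1} x \<partial>lborel)" for i N
    define B where "B N = ennreal (2 * K\<^sup>2 * real n) * (\<Sum>i\<in>I. of_nat (2 * M i + 1) * JD i N)
         + ennreal (2 * (\<delta> N)\<^sup>2 * (2 * real R))" for N
    have JB: "J \<le> B N" for N
    proof -
      have "J \<le> (\<integral>\<^sup>+x. ennreal (2 * K\<^sup>2 * real n) * (\<Sum>i\<in>I. ennreal ((cmod (D i N (x + c i)))\<^sup>2) * indicator {- real R..real R} x)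
                  + ennreal (2 * (\<delta> N)\<^sup>2) * indicator {- real R..real R} x \<partial>lborel)"
        unfolding J_def
      proof (rule nn_integral_mono)
        fix x
        show "ennreal ((cmod (Fg x))\<^sup>2) * indicator {- real R..real R} x
          \<le> ennreal (2 * K\<^sup>2 * real n) * (\<Sum>i\<in>I. ennreal ((cmod (D i N (x + c i)))\<^sup>2) * indicator {- real R..real R} x)
                  + ennreal (2 * (\<delta> N)\<^sup>2) * indicator {- real R..real R} x"
        proof (cases "x \<in> {- real R..real R}")
          case False then show ?thesis by simp
        next
          case True
          have "ennreal ((cmod (Fg x))\<^sup>2) \<le> ennreal (2 * K\<^sup>2 * real n * (\<Sum>i\<in>I. (cmod (D i N (x + c i)))\<^sup>2) + 2 * (\<delta> N)\<^sup>2)"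
            by (rule ennreal_leI[OF pw])
          also have "\<dots> = ennreal (2 * K\<^sup>2 * real n) * (\<Sum>i\<in>I. ennreal ((cmod (D i N (x + c i)))\<^sup>2)) + ennreal (2 * (\<delta> N)\<^sup>2)"
          proof -
            have a: "(\<Sum>i\<in>I. ennreal ((cmod (D i N (x + c i)))\<^sup>2)) = ennreal (\<Sum>i\<in>I. (cmod (D i N (x + c i)))\<^sup>2)" by (rule sum_ennreal) simp
            have b: "ennreal (2 * K\<^sup>2 * real n) * ennreal (\<Sum>i\<in>I. (cmod (D i N (x + c i)))\<^sup>2) = ennreal (2 * K\<^sup>2 * real n * (\<Sum>i\<in>I. (cmod (D i N (x + c i)))\<^sup>2))"
              by (rule ennreal_mult[symmetric]) (simp_all add: sum_nonneg)
            have c: "ennreal (2 * K\<^sup>2 * real n * (\<Sum>i\<in>I. (cmod (D i N (x + c i)))\<^sup>2) + 2 * (\<delta> N)\<^sup>2) = ennreal (2 * K\<^sup>2 * real n * (\<Sum>i\<in>I. (cmod (D i N (x + c i)))\<^sup>2)) + ennreal (2 * (\<delta> N)\<^sup>2)"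
              by (rule ennreal_plus) (simp_all add: sum_nonneg)
            show ?thesis unfolding a b c ..
          qed
          finally show ?thesis using True by simp
        qed
      qed
      also have "\<dots> = ennreal (2 * K\<^sup>2 * real n) * (\<Sum>i\<in>I. \<integral>\<^sup>+x. ennreal ((cmod (D i N (x + c i)))\<^sup>2) * indicator {- real R..real R} x \<partial>lborel)
                  + ennreal (2 * (\<delta> N)\<^sup>2) * emeasure lborel {- real R..real R}"
      proof -
        have m1: "(\<lambda>x. ennreal (2 * K\<^sup>2 * real n) * (\<Sum>i\<in>I. ennreal ((cmod (D i N (x + c i)))\<^sup>2) * indicator {- real R..real R} x)) \<in> borel_measurable lborel"
          using Dsm by measurable
        have m2: "(\<lambda>x. ennreal (2 * (\<delta> N)\<^sup>2) * indicator {- real R..real R} x) \<in> borel_measurable lborel"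
          by measurable
        have m3: "(\<lambda>x. (\<Sum>i\<in>I. ennreal ((cmod (D i N (x + c i)))\<^sup>2) * indicator {- real R..real R} x)) \<in> borel_measurable lborel"
          using Dsm by measurable
        show ?thesis
          apply (subst nn_integral_add[OF m1 m2])
          apply (subst nn_integral_cmult[OF m3])
          apply (subst nn_integral_sum)
           apply (use Dsm in measurable)[1]
          apply (subst nn_integral_cmult_indicator)
           apply simp
          apply (rule refl)
          done
      qed
      also have "\<dots> \<le> B N"
        unfolding B_def
      proof (rule add_mono)
        show "ennreal (2 * K\<^sup>2 * real n) * (\<Sum>i\<in>I. \<integral>\<^sup>+x. ennreal ((cmod (D i N (x + c i)))\<^sup>2) * indicator {- real R..real R} x \<partial>lborel)
           \<le> ennreal (2 * K\<^sup>2 * real n) * (\<Sum>i\<in>I. of_nat (2 * M i + 1) * JD i N)"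
        proof (rule mult_left_mono[OF sum_mono])
          fix i assume i: "i \<in> I"
          show "(\<integral>\<^sup>+x. ennreal ((cmod (D i N (x + c i)))\<^sup>2) * indicator {- real R..real R} x \<partial>lborel) \<le> of_nat (2 * M i + 1) * JD i N"
          proof -
            have hm: "(\<lambda>x. ennreal ((cmod (D i N x))\<^sup>2)) \<in> borel_measurable borel" using Dm[OF i] by measurable
            show ?thesis unfolding M_def JD_def by (rule per_shift_le[OF hm]) (simp add: Dp[OF i])
          qed
        qed simp
      next
        show "ennreal (2 * (\<delta> N)\<^sup>2) * emeasure lborel {- real R..real R} \<le> ennreal (2 * (\<delta> N)\<^sup>2 * (2 * real R))"
          by (simp add: ennreal_mult[symmetric])
      qed
      finally show ?thesis .
    qed
    have BL: "B \<longlonglongrightarrow> 0"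
    proof -
      have "(\<lambda>N. ennreal (2 * K\<^sup>2 * real n) * (\<Sum>i\<in>I. of_nat (2 * M i + 1) * JD i N)) \<longlonglongrightarrow> ennreal (2 * K\<^sup>2 * real n) * (\<Sum>i\<in>I. of_nat (2 * M i + 1) * 0)"
        by (intro ennreal_tendsto_cmult tendsto_sum) (auto simp: JD_def ennreal_mult_less_top of_nat_less_top intro!: Dl)
      moreover have "(\<lambda>N. ennreal (2 * (\<delta> N)\<^sup>2 * (2 * real R))) \<longlonglongrightarrow> ennreal (2 * 0\<^sup>2 * (2 * real R))"
        by (intro tendsto_ennrealI tendsto_intros dl)
      ultimately show ?thesis unfolding B_def using tendsto_add by fastforce
    qed
    have "J \<le> 0"
      by (rule tendsto_le[OF trivial_limit_sequentially BL tendsto_const]) (simp add: JB)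
    then show ?thesis unfolding J_def by simp
  qed
  have "AE x in lborel. x \<in> {- real R..real R} \<longrightarrow> Fg x = 0" for R :: nat
  proof -
    have "AE x in lborel. ennreal ((cmod (Fg x))\<^sup>2) * indicator {- real R..real R} x = 0"
      using J0[of R] by (subst (asm) nn_integral_0_iff_AE) (use Fgm in measurable)
    then show ?thesis by eventually_elim (auto simp: indicator_def)
  qed
  then have "AE x in lborel. \<forall>R::nat. x \<in> {- real R..real R} \<longrightarrow> Fg x = 0"
    unfolding AE_all_countable by blast
  then show ?thesis
  proof eventually_elim
    case (elim x)
    have "x \<in> {- real (nat \<lceil>\<bar>x\<bar>\<rceil>)..real (nat \<lceil>\<bar>x\<bar>\<rceil>)}" proof -
      have "\<bar>x\<bar> \<le> of_int \<lceil>\<bar>x\<bar>\<rceil>" by (rule le_of_int_ceiling)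
      then have "- of_int \<lceil>\<bar>x\<bar>\<rceil> \<le> x \<and> x \<le> of_int \<lceil>\<bar>x\<bar>\<rceil>" unfolding abs_le_iff by linarith
      then show ?thesis by simp
    qed
    then show ?case using elim by blast
  qed
qed



lemma AE_shift:
  assumes "AE x in lborel. P x" shows "AE xi in lborel. P (xi + c)"
proof -
  from assms obtain N where N: "{x. \<not> P x} \<subseteq> N" "N \<in> null_sets lborel"
    unfolding eventually_ae_filter by auto
  have "{x. x - (- c) \<in> N} \<in> null_sets lborel" by (rule null_sets_translation[OF N(2)])
  then show ?thesis
    by (rule AE_I') (use N(1) in auto)
qed

lemma lamc_bd: "0 \<le> l \<Longrightarrow> l \<le> 1 \<Longrightarrow> 0 \<le> lamc l \<and> lamc l \<le> 1"
  unfolding lamc_def by (auto simp: power_le_one)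

lemma coin_bd: assumes "0 \<le> l2" "l2 \<le> 1" shows "cmod (coin l2 Phi th n j k) \<le> 2"
proof -
  define a where "a = 2 * pi * (of_int n * Phi + th)"
  have c: "cmod (complex_of_real (l2 * cos a)) \<le> 1"
  proof -
    have "\<bar>l2 * cos a\<bar> \<le> 1" using assms abs_cos_le_one[of a] by (simp add: abs_mult mult_le_one)
    then show ?thesis by (simp only: norm_of_real)
  qed
  have s: "cmod (complex_of_real (l2 * sin a)) \<le> 1"
  proof -
    have "\<bar>l2 * sin a\<bar> \<le> 1" using assms abs_sin_le_one[of a] by (simp add: abs_mult mult_le_one)
    then show ?thesis by (simp only: norm_of_real)
  qed
  have d: "cmod (\<i> * complex_of_real (lamc l2)) \<le> 1" using lamc_bd[OF assms] by (simp add: norm_mult)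
  show ?thesis unfolding coin_def Let_def a_def[symmetric]
    using c s d norm_triangle_ineq[of "complex_of_real (l2 * cos a)" "\<i> * complex_of_real (lamc l2)"]
      norm_triangle_ineq4[of "complex_of_real (l2 * cos a)" "\<i> * complex_of_real (lamc l2)"]
    by (auto simp del: norm_of_real)
qed

definition nu :: "(int \<Rightarrow> complex \<times> complex) \<Rightarrow> int \<Rightarrow> real" where
  "nu psi k = cmod (fst (psi k)) + cmod (snd (psi k))"

lemma coin_op_bd:
  assumes "0 \<le> l2" "l2 \<le> 1"
  shows "cmod (fst (coin_op (coin l2 Phi th) psi m)) \<le> 2 * nu psi m"
    and "cmod (snd (coin_op (coin l2 Phi th) psi m)) \<le> 2 * nu psi m"
proof -
  have b: "cmod (coin l2 Phi th m j k * w) \<le> 2 * cmod w" for j k w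
    using coin_bd[OF assms, of Phi th m j k] by (simp add: norm_mult mult_right_mono)
  show "cmod (fst (coin_op (coin l2 Phi th) psi m)) \<le> 2 * nu psi m"
    unfolding coin_op_def nu_def using b[of 1 1 "fst (psi m)"] b[of 1 2 "snd (psi m)"]
      norm_triangle_ineq[of "coin l2 Phi th m 1 1 * fst (psi m)" "coin l2 Phi th m 1 2 * snd (psi m)"]
    by simp
  show "cmod (snd (coin_op (coin l2 Phi th) psi m)) \<le> 2 * nu psi m"
    unfolding coin_op_def nu_def using b[of 2 1 "fst (psi m)"] b[of 2 2 "snd (psi m)"]
      norm_triangle_ineq[of "coin l2 Phi th m 2 1 * fst (psi m)" "coin l2 Phi th m 2 2 * snd (psi m)"]
    by simp
qed

lemma UAMO_bd:
  assumes "0 \<le> l1" "l1 \<le> 1" "0 \<le> l2" "l2 \<le> 1"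
  shows "cmod (fst (UAMO l1 l2 Phi th psi m)) \<le> 2 * (nu psi (m - 1) + nu psi m + nu psi (m + 1))"
    and "cmod (snd (UAMO l1 l2 Phi th psi m)) \<le> 2 * (nu psi (m - 1) + nu psi m + nu psi (m + 1))"
proof -
  define U where "U = coin_op (coin l2 Phi th) psi"
  note cb = coin_op_bd[OF assms(3,4), of Phi th psi, folded U_def]
  have lb: "cmod (complex_of_real l1 * w) \<le> cmod w" "cmod (complex_of_real (lamc l1) * w) \<le> cmod w" for w
    using assms(1,2) lamc_bd[OF assms(1,2)] by (auto simp: norm_mult intro!: mult_left_le_one_le)
  have n0: "0 \<le> nu psi k" for k by (simp add: nu_def)
  show "cmod (fst (UAMO l1 l2 Phi th psi m)) \<le> 2 * (nu psi (m - 1) + nu psi m + nu psi (m + 1))"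
    unfolding UAMO_def shift_op_def U_def[symmetric] fst_conv
    using norm_triangle_ineq4[of "complex_of_real l1 * fst (U (m - 1))" "complex_of_real (lamc l1) * snd (U m)"]
      lb[of "fst (U (m - 1))"] lb[of "snd (U m)"] cb(1)[of "m - 1"] cb(2)[of m] n0[of "m+1"]
    by (smt (verit))
  show "cmod (snd (UAMO l1 l2 Phi th psi m)) \<le> 2 * (nu psi (m - 1) + nu psi m + nu psi (m + 1))"
    unfolding UAMO_def shift_op_def U_def[symmetric] snd_conv
    using norm_triangle_ineq[of "complex_of_real (lamc l1) * fst (U m)" "complex_of_real l1 * snd (U (m + 1))"]
      lb[of "fst (U m)"] lb[of "snd (U (m + 1))"] cb(1)[of "m"] cb(2)[of "m + 1"] n0[of "m - 1"]
    by (smt (verit))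
qed

lemma UAMO_local:
  assumes "psi (m - 1) = psi' (m - 1)" "psi m = psi' m" "psi (m + 1) = psi' (m + 1)"
  shows "UAMO l1 l2 Phi th psi m = UAMO l1 l2 Phi th psi' m"
  unfolding UAMO_def shift_op_def coin_op_def using assms by simp


definition trunc :: "nat \<Rightarrow> (int \<Rightarrow> complex \<times> complex) \<Rightarrow> int \<Rightarrow> complex \<times> complex" where
  "trunc N psi n = (if \<bar>n\<bar> \<le> int N then psi n else (0, 0))"

lemma trunc_lone:
  assumes sel: "sel = fst \<or> sel = snd"
  shows "lone (\<lambda>n. sel (trunc N psi n))"
proof -
  have "(\<lambda>n. norm (sel (trunc N psi n))) summable_on {- int N..int N}" by simp
  moreover have "((\<lambda>n. norm (sel (trunc N psi n))) summable_on {- int N..int N}) = ((\<lambda>n. norm (sel (trunc N psi n))) summable_on UNIV)"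
    by (rule summable_on_cong_neutral) (use sel in \<open>auto simp: trunc_def\<close>)
  ultimately show ?thesis unfolding lone_def by simp
qed

lemma trunc_IF:
  assumes sel: "sel = fst \<or> sel = snd"
  shows "inv_fourier (\<lambda>n. sel (trunc N psi n)) x = (\<Sum>n\<in>{- int N..int N}. cis (2 * pi * of_int n * x) * sel (psi n))"
proof -
  have "inv_fourier (\<lambda>n. sel (trunc N psi n)) x = (\<Sum>\<^sub>\<infinity>n\<in>{- int N..int N}. cis (2 * pi * of_int n * x) * sel (psi n))"
    unfolding inv_fourier_def
    by (rule infsum_cong_neutral) (use sel in \<open>auto simp: trunc_def\<close>)
  then show ?thesis by simp
qed

lemma l2_decay:
  assumes l2: "in_l2 psi" and h: "inj (h :: nat \<Rightarrow> int)"
  shows "(\<lambda>N. nu psi (h N)) \<longlonglongrightarrow> 0"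
proof -
  define q where "q k = (cmod (fst (psi k)))\<^sup>2 + (cmod (snd (psi k)))\<^sup>2" for k
  have "q summable_on UNIV" using l2 unfolding in_l2_def q_def .
  then have "q summable_on range h" by (rule summable_on_subset) simp
  then have "(q \<circ> h) summable_on UNIV" using summable_on_reindex[of h UNIV q] h by simp
  then have "summable (q \<circ> h)"
    by (subst (asm) summable_on_UNIV_nonneg_real_iff) (auto simp: q_def)
  then have "(q \<circ> h) \<longlonglongrightarrow> 0" by (rule summable_LIMSEQ_zero)
  then have "(\<lambda>N. sqrt (2 * q (h N))) \<longlonglongrightarrow> sqrt (2 * 0)"
    by (intro tendsto_real_sqrt tendsto_mult tendsto_const) (simp add: o_def)
  then have s: "(\<lambda>N. sqrt (2 * q (h N))) \<longlonglongrightarrow> 0" by simp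
  have b: "norm (nu psi k) \<le> sqrt (2 * q k)" for k
  proof -
    have "(nu psi k)\<^sup>2 \<le> 2 * q k" unfolding nu_def q_def using sq_tri[of "cmod (fst (psi k))" "cmod (snd (psi k))"] by simp
    then have "nu psi k \<le> sqrt (2 * q k)" by (rule real_le_rsqrt)
    moreover have "0 \<le> nu psi k" by (simp add: nu_def)
    ultimately show ?thesis by simp
  qed
  show ?thesis by (rule Lim_null_comparison[OF _ s]) (use b in \<open>simp add: always_eventually\<close>)
qed

lemma l2_decay_pm:
  assumes "in_l2 psi"
  shows "(\<lambda>N. nu psi (int N + j)) \<longlonglongrightarrow> 0" "(\<lambda>N. nu psi (- int N + j)) \<longlonglongrightarrow> 0"
  by (rule l2_decay[OF assms], simp add: inj_def)+


definition bnu :: "(int \<Rightarrow> complex \<times> complex) \<Rightarrow> int \<Rightarrow> real" where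
  "bnu psi m = 3 * (nu psi (m - 1) + nu psi m + nu psi (m + 1))"

definition dlt :: "(int \<Rightarrow> complex \<times> complex) \<Rightarrow> nat \<Rightarrow> real" where
  "dlt psi N = bnu psi (- int N - 1) + bnu psi (- int N) + bnu psi (int N) + bnu psi (int N + 1)"

lemma nu_trunc: "nu (trunc N psi) k \<le> nu psi k"
  by (simp add: nu_def trunc_def)

lemma bnu_nn: "0 \<le> bnu psi m" by (simp add: bnu_def nu_def)

lemma Rbound:
  assumes l: "0 \<le> l1" "l1 \<le> 1" "0 \<le> l2" "l2 \<le> 1" and z: "cmod z = 1"
    and eig: "\<forall>n. UAMO l1 l2 Phi th psi n = (z * fst (psi n), z * snd (psi n))"
    and sel: "sel = fst \<or> sel = snd"
  shows "cmod (inv_fourier (\<lambda>m. sel (UAMO l1 l2 Phi th (trunc N psi) m) - z * sel (trunc N psi m)) x) \<le> dlt psi N"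
proof -
  define R where "R m = sel (UAMO l1 l2 Phi th (trunc N psi) m) - z * sel (trunc N psi m)" for m
  define F where "F = {- int N - 1, - int N, int N, int N + 1}"
  have eigs: "sel (UAMO l1 l2 Phi th psi m) = z * sel (psi m)" for m using eig sel by auto
  have R0: "R m = 0" if "m \<notin> F" for m
  proof (cases "\<bar>m\<bar> < int N")
    case True
    then have "UAMO l1 l2 Phi th (trunc N psi) m = UAMO l1 l2 Phi th psi m"
      by (intro UAMO_local) (auto simp: trunc_def)
    moreover have "trunc N psi m = psi m" using True by (simp add: trunc_def)
    ultimately show ?thesis unfolding R_def by (simp add: eigs)
  next
    case False
    then have big: "\<bar>m\<bar> \<ge> int N + 2" using that unfolding F_def by auto
    then have "UAMO l1 l2 Phi th (trunc N psi) m = UAMO l1 l2 Phi th (\<lambda>_. (0, 0)) m"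
      by (intro UAMO_local) (auto simp: trunc_def)
    moreover have "UAMO l1 l2 Phi th (\<lambda>_. (0, 0)) m = (0, 0)"
      by (simp add: UAMO_def shift_op_def coin_op_def)
    moreover have "trunc N psi m = (0, 0)" using big by (simp add: trunc_def)
    ultimately show ?thesis unfolding R_def using sel by auto
  qed
  have Rb: "cmod (R m) \<le> bnu psi m" for m
  proof -
    have u: "cmod (sel (UAMO l1 l2 Phi th (trunc N psi) m)) \<le> 2 * (nu (trunc N psi) (m - 1) + nu (trunc N psi) m + nu (trunc N psi) (m + 1))"
      using UAMO_bd[OF l, of Phi th "trunc N psi" m] sel by auto
    have v: "cmod (z * sel (trunc N psi m)) \<le> nu (trunc N psi) m"
      using sel z by (auto simp: norm_mult nu_def)
    have "cmod (R m) \<le> cmod (sel (UAMO l1 l2 Phi th (trunc N psi) m)) + cmod (z * sel (trunc N psi m))"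
      unfolding R_def by (rule norm_triangle_ineq4)
    also have "\<dots> \<le> 3 * (nu (trunc N psi) (m - 1) + nu (trunc N psi) m + nu (trunc N psi) (m + 1))"
      using u v by (smt (verit) nu_def norm_ge_zero)
    also have "\<dots> \<le> bnu psi m" unfolding bnu_def using nu_trunc[of N psi] by (smt (verit))
    finally show ?thesis .
  qed
  have "inv_fourier R x = (\<Sum>\<^sub>\<infinity>m\<in>F. cis (2 * pi * of_int m * x) * R m)"
    unfolding inv_fourier_def by (rule infsum_cong_neutral) (use R0 in auto)
  also have "\<dots> = (\<Sum>m\<in>F. cis (2 * pi * of_int m * x) * R m)" by (simp add: F_def)
  finally have "cmod (inv_fourier R x) \<le> (\<Sum>m\<in>F. cmod (cis (2 * pi * of_int m * x) * R m))"
    by (simp add: norm_sum)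
  also have "\<dots> \<le> (\<Sum>m\<in>F. bnu psi m)" by (rule sum_mono) (simp add: norm_mult Rb)
  also have "\<dots> \<le> dlt psi N"
  proof (cases "N = 0")
    case True then show ?thesis by (simp add: F_def dlt_def bnu_nn)
  next
    case False then show ?thesis by (simp add: F_def dlt_def)
  qed
  finally show ?thesis unfolding R_def .
qed

lemma dlt_tendsto: assumes "in_l2 psi" shows "dlt psi \<longlonglongrightarrow> 0"
proof -
  define a where "a j N = nu psi (j - int N)" for j N
  define b where "b j N = nu psi (int N + j)" for j N
  have e: "dlt psi = (\<lambda>N. 3 * (a (-2) N + a (-1) N + a 0 N) + 3 * (a (-1) N + a 0 N + a 1 N)
      + 3 * (b (-1) N + b 0 N + b 1 N) + 3 * (b 0 N + b 1 N + b 2 N))"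
  proof (rule ext)
    fix N :: nat
    have h: "- int N - 1 = - 1 - int N" "- int N - 2 = - 2 - int N" by simp_all
    show "dlt psi N = 3 * (a (-2) N + a (-1) N + a 0 N) + 3 * (a (-1) N + a 0 N + a 1 N)
      + 3 * (b (-1) N + b 0 N + b 1 N) + 3 * (b 0 N + b 1 N + b 2 N)"
      by (simp add: dlt_def bnu_def a_def b_def algebra_simps h)
  qed
  have ta: "a j \<longlonglongrightarrow> 0" for j unfolding a_def using l2_decay_pm(2)[OF assms, of j] by simp
  have tb: "b j \<longlonglongrightarrow> 0" for j unfolding b_def by (rule l2_decay_pm[OF assms])
  have "(\<lambda>N. 3 * (a (-2) N + a (-1) N + a 0 N) + 3 * (a (-1) N + a 0 N + a 1 N)
      + 3 * (b (-1) N + b 0 N + b 1 N) + 3 * (b 0 N + b 1 N + b 2 N)) \<longlonglongrightarrow>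
      3 * (0 + 0 + 0) + 3 * (0 + 0 + 0) + 3 * (0 + 0 + 0) + 3 * (0 + 0 + 0)"
    by (intro tendsto_intros ta tb)
  then show ?thesis unfolding e by simp
qed



lemma Ep_lin: "Ep l1 l2 Phi th z g1 g2 x - Ep l1 l2 Phi th z s1 s2 x = Ep l1 l2 Phi th z (\<lambda>y. g1 y - s1 y) (\<lambda>y. g2 y - s2 y) x"
  by (simp add: Ep_def Up_def Um_def Let_def field_simps)

lemma Em_lin: "Em l1 l2 Phi th z g1 g2 x - Em l1 l2 Phi th z s1 s2 x = Em l1 l2 Phi th z (\<lambda>y. g1 y - s1 y) (\<lambda>y. g2 y - s2 y) x"
  by (simp add: Em_def Up_def Um_def Let_def field_simps)

lemma norm5:
  assumes "cmod c1 \<le> 1" "cmod c2 \<le> 1" "cmod c3 \<le> 1" "cmod c4 \<le> 1" "cmod c5 \<le> 1"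
  shows "cmod (c1 * v1 + c2 * v2 + c3 * v3 + c4 * v4 + c5 * v5) \<le> cmod v1 + cmod v2 + cmod v3 + cmod v4 + cmod v5"
proof -
  have m: "cmod (c * v) \<le> cmod v" if "cmod c \<le> 1" for c v :: complex
    using that by (simp add: norm_mult mult_left_le_one_le)
  show ?thesis
    using m[OF assms(1), of v1] m[OF assms(2), of v2] m[OF assms(3), of v3] m[OF assms(4), of v4] m[OF assms(5), of v5]
      norm_triangle_ineq[of "c1 * v1 + c2 * v2 + c3 * v3 + c4 * v4" "c5 * v5"]
      norm_triangle_ineq[of "c1 * v1 + c2 * v2 + c3 * v3" "c4 * v4"]
      norm_triangle_ineq[of "c1 * v1 + c2 * v2" "c3 * v3"]
      norm_triangle_ineq[of "c1 * v1" "c2 * v2"]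
    by linarith
qed

lemma UpUm_bd:
  assumes "0 \<le> l2" "l2 \<le> 1"
  shows "cmod (Up l2 Phi th h1 h2 x) \<le> cmod (h1 (x + Phi)) + cmod (h1 (x - Phi)) + cmod (h1 x) + cmod (h2 (x + Phi)) + cmod (h2 (x - Phi))"
    and "cmod (Um l2 Phi th h1 h2 x) \<le> cmod (h1 (x + Phi)) + cmod (h1 (x - Phi)) + cmod (h2 x) + cmod (h2 (x + Phi)) + cmod (h2 (x - Phi))"
proof -
  define t where "t = cis (2 * pi * th)"
  have t0: "t \<noteq> 0" and tn: "cmod t = 1" "cmod (inverse t) = 1" by (simp_all add: t_def norm_inverse)
  have lc: "0 \<le> lamc l2" "lamc l2 \<le> 1" using lamc_bd[OF assms] by auto
  have n1: "cmod (of_real l2 * t / 2) \<le> 1" "cmod (of_real l2 / (2 * t)) \<le> 1"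
     "cmod (\<i> * of_real (lamc l2)) \<le> 1" "cmod (- of_real l2 * t / (2 * \<i>)) \<le> 1"
     "cmod (of_real l2 / (2 * \<i> * t)) \<le> 1" "cmod (of_real l2 * t / (2 * \<i>)) \<le> 1"
     "cmod (- of_real l2 / (2 * \<i> * t)) \<le> 1" "cmod (- \<i> * of_real (lamc l2)) \<le> 1"
    using assms lc tn by (simp_all add: norm_mult norm_divide)
  have "Up l2 Phi th h1 h2 x = (of_real l2 * t / 2) * h1 (x + Phi) + (of_real l2 / (2 * t)) * h1 (x - Phi)
      + (\<i> * of_real (lamc l2)) * h1 x + (- of_real l2 * t / (2 * \<i>)) * h2 (x + Phi) + (of_real l2 / (2 * \<i> * t)) * h2 (x - Phi)"
    unfolding Up_def Let_def t_def[symmetric] using t0 by (simp add: field_simps)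
  then show "cmod (Up l2 Phi th h1 h2 x) \<le> cmod (h1 (x + Phi)) + cmod (h1 (x - Phi)) + cmod (h1 x) + cmod (h2 (x + Phi)) + cmod (h2 (x - Phi))"
    using norm5[OF n1(1-5)] by simp
  have "Um l2 Phi th h1 h2 x = (of_real l2 * t / (2 * \<i>)) * h1 (x + Phi) + (- of_real l2 / (2 * \<i> * t)) * h1 (x - Phi)
      + (- \<i> * of_real (lamc l2)) * h2 x + (of_real l2 * t / 2) * h2 (x + Phi) + (of_real l2 / (2 * t)) * h2 (x - Phi)"
    unfolding Um_def Let_def t_def[symmetric] using t0 by (simp add: field_simps)
  then show "cmod (Um l2 Phi th h1 h2 x) \<le> cmod (h1 (x + Phi)) + cmod (h1 (x - Phi)) + cmod (h2 x) + cmod (h2 (x + Phi)) + cmod (h2 (x - Phi))"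
    using norm5[OF n1(6) n1(7) n1(8) n1(1) n1(2)] by simp
qed

lemma EpEm_bd:
  assumes l: "0 \<le> l1" "l1 \<le> 1" "0 \<le> l2" "l2 \<le> 1" and z: "cmod z = 1"
  shows "cmod (Ep l1 l2 Phi th z h1 h2 x) \<le> 2 * (cmod (h1 x) + cmod (h1 (x + Phi)) + cmod (h1 (x - Phi)) + cmod (h2 x) + cmod (h2 (x + Phi)) + cmod (h2 (x - Phi)))"
    and "cmod (Em l1 l2 Phi th z h1 h2 x) \<le> 2 * (cmod (h1 x) + cmod (h1 (x + Phi)) + cmod (h1 (x - Phi)) + cmod (h2 x) + cmod (h2 (x + Phi)) + cmod (h2 (x - Phi)))"
proof -
  note b = UpUm_bd[OF l(3,4), of Phi th h1 h2 x]
  have lc: "0 \<le> lamc l1" "lamc l1 \<le> 1" using lamc_bd[OF l(1,2)] by auto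
  have m1: "cmod (of_real l1 * cis (2 * pi * x) * w) \<le> cmod w" "cmod (of_real (lamc l1) * w) \<le> cmod w"
     "cmod (of_real l1 * cis (- (2 * pi * x)) * w) \<le> cmod w" "cmod (z * w) \<le> cmod w" for w
    using l lc z by (auto simp: norm_mult mult_left_le_one_le)
  show "cmod (Ep l1 l2 Phi th z h1 h2 x) \<le> 2 * (cmod (h1 x) + cmod (h1 (x + Phi)) + cmod (h1 (x - Phi)) + cmod (h2 x) + cmod (h2 (x + Phi)) + cmod (h2 (x - Phi)))"
    unfolding Ep_def
    using norm_triangle_ineq4[of "of_real l1 * cis (2 * pi * x) * Up l2 Phi th h1 h2 x - of_real (lamc l1) * Um l2 Phi th h1 h2 x" "z * h1 x"]
      norm_triangle_ineq4[of "of_real l1 * cis (2 * pi * x) * Up l2 Phi th h1 h2 x" "of_real (lamc l1) * Um l2 Phi th h1 h2 x"]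
      m1(1)[of "Up l2 Phi th h1 h2 x"] m1(2)[of "Um l2 Phi th h1 h2 x"] m1(4)[of "h1 x"] b
      norm_ge_zero[of "h1 x"] norm_ge_zero[of "h2 x"]
    by (smt (verit))
  show "cmod (Em l1 l2 Phi th z h1 h2 x) \<le> 2 * (cmod (h1 x) + cmod (h1 (x + Phi)) + cmod (h1 (x - Phi)) + cmod (h2 x) + cmod (h2 (x + Phi)) + cmod (h2 (x - Phi)))"
    unfolding Em_def
    using norm_triangle_ineq4[of "of_real (lamc l1) * Up l2 Phi th h1 h2 x + of_real l1 * cis (- (2 * pi * x)) * Um l2 Phi th h1 h2 x" "z * h2 x"]
      norm_triangle_ineq[of "of_real (lamc l1) * Up l2 Phi th h1 h2 x" "of_real l1 * cis (- (2 * pi * x)) * Um l2 Phi th h1 h2 x"]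
      m1(3)[of "Um l2 Phi th h1 h2 x"] m1(2)[of "Up l2 Phi th h1 h2 x"] m1(4)[of "h2 x"] b
      norm_ge_zero[of "h1 x"] norm_ge_zero[of "h2 x"]
    by (smt (verit))
qed


lemma cis_meas: "(\<lambda>x::real. cis (a * x)) \<in> borel_measurable borel"
  by (intro borel_measurable_continuous_onI continuous_intros)

lemma cis_meas': "(\<lambda>x::real. cis (- (a * x))) \<in> borel_measurable borel"
  by (intro borel_measurable_continuous_onI continuous_intros)

lemma EpEm_meas:
  assumes g1: "g1 \<in> borel_measurable borel" and g2: "g2 \<in> borel_measurable borel"
  shows "(\<lambda>x. Ep l1 l2 Phi th z g1 g2 x) \<in> borel_measurable borel"
    and "(\<lambda>x. Em l1 l2 Phi th z g1 g2 x) \<in> borel_measurable borel"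
proof -
  have a: "(\<lambda>x. g1 (x + Phi)) \<in> borel_measurable borel"
    "(\<lambda>x. g2 (x + Phi)) \<in> borel_measurable borel"
    by (simp_all add: shift_meas g1 g2)
  have b: "(\<lambda>x. g1 (x - Phi)) \<in> borel_measurable borel" "(\<lambda>x. g2 (x - Phi)) \<in> borel_measurable borel"
    using shift_meas[OF g1, of "-Phi"] shift_meas[OF g2, of "-Phi"] by simp_all
  note c = cis_meas[of "2 * pi"] cis_meas'[of "2 * pi"]
  show "(\<lambda>x. Ep l1 l2 Phi th z g1 g2 x) \<in> borel_measurable borel"
    unfolding Ep_def Up_def Um_def Let_def using a b c g1 g2 by measurable
  show "(\<lambda>x. Em l1 l2 Phi th z g1 g2 x) \<in> borel_measurable borel"
    unfolding Em_def Up_def Um_def Let_def using a b c g1 g2 by measurable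
qed

definition tpoly :: "nat \<Rightarrow> (int \<Rightarrow> complex) \<Rightarrow> real \<Rightarrow> complex" where
  "tpoly N f x = (\<Sum>n\<in>{- int N..int N}. cis (2 * pi * of_int n * x) * f n)"

lemma tpoly_meas: "tpoly N f \<in> borel_measurable borel"
  unfolding tpoly_def
  by (intro borel_measurable_continuous_onI continuous_intros)

lemma tpoly_per: "tpoly N f (x + 1) = tpoly N f x"
proof -
  have "cis (2 * pi * of_int n * (x + 1)) = cis (2 * pi * of_int n * x)" for n :: int
  proof -
    have "cis (2 * pi * of_int n * (x + 1)) = cis (2 * pi * of_int n * x) * cis (2 * pi * of_int n)"
      by (simp add: cis_mult algebra_simps)
    also have "cis (2 * pi * of_int n) = 1" by (rule cis_multiple_2pi) simp
    finally show ?thesis by simp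
  qed
  then show ?thesis unfolding tpoly_def by simp
qed



lemma L2part:
  fixes psi :: "int \<Rightarrow> complex \<times> complex"
  assumes l: "0 \<le> l1" "l1 \<le> 1" "0 \<le> l2" "l2 \<le> 1" and z: "cmod z = 1"
    and eig: "\<forall>n. UAMO l1 l2 Phi th psi n = (z * fst (psi n), z * snd (psi n))"
    and l2: "in_l2 psi"
    and gp: "is_inv_fourier_L2 (\<lambda>n. fst (psi n)) gp" and gm: "is_inv_fourier_L2 (\<lambda>n. snd (psi n)) gm"
  shows "AE x in lborel. Ep l1 l2 Phi th z gp gm x = 0 \<and> Em l1 l2 Phi th z gp gm x = 0"
proof -
  define f where "f = (\<lambda>n. fst (psi n))"
  define g where "g = (\<lambda>n. snd (psi n))"
  have gpm: "gp \<in> borel_measurable borel" and gpp: "\<And>x. gp (x + 1) = gp x"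
    and gpl: "(\<lambda>N. \<integral>\<^sup>+x. ennreal ((cmod (gp x - tpoly N f x))\<^sup>2) * indicator {0..1} x \<partial>lborel) \<longlonglongrightarrow> 0"
    using gp unfolding is_inv_fourier_L2_def tpoly_def f_def by auto
  have gmm: "gm \<in> borel_measurable borel" and gmp: "\<And>x. gm (x + 1) = gm x"
    and gml: "(\<lambda>N. \<integral>\<^sup>+x. ennreal ((cmod (gm x - tpoly N g x))\<^sup>2) * indicator {0..1} x \<partial>lborel) \<longlonglongrightarrow> 0"
    using gm unfolding is_inv_fourier_L2_def tpoly_def g_def by auto
  define D where "D i N y = (if i < 3 then gp y - tpoly N f y else gm y - tpoly N g y)" for i N :: nat and y
  define c where "c i = (if i mod 3 = 0 then 0 else if i mod 3 = 1 then Phi else - Phi)" for i :: nat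
  define I where "I = {0..<6::nat}"
  have I6: "I = {0, 1, 2, 3, 4, 5}" unfolding I_def by auto
  have sumD: "(\<Sum>i\<in>I. cmod (D i N (x + c i))) =
      cmod (gp x - tpoly N f x) + cmod (gp (x + Phi) - tpoly N f (x + Phi)) + cmod (gp (x - Phi) - tpoly N f (x - Phi))
    + cmod (gm x - tpoly N g x) + cmod (gm (x + Phi) - tpoly N g (x + Phi)) + cmod (gm (x - Phi) - tpoly N g (x - Phi))" for N x
    unfolding I6 by (simp add: D_def c_def)
  have tp: "tpoly N f = inv_fourier (\<lambda>n. fst (trunc N psi n))" "tpoly N g = inv_fourier (\<lambda>n. snd (trunc N psi n))" for N
    by (rule ext, simp add: trunc_IF tpoly_def f_def g_def)+
  have fin: "finite I" unfolding I_def by simp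
  have Dm: "D i N \<in> borel_measurable borel" if "i \<in> I" for i N
    unfolding D_def using gpm gmm tpoly_meas[of N f] tpoly_meas[of N g] by (cases "i < 3") simp_all
  have Dp: "D i N (x + 1) = D i N x" if "i \<in> I" for i N x
    unfolding D_def by (simp add: gpp gmp tpoly_per)
  have Dl: "(\<lambda>N. \<integral>\<^sup>+x. ennreal ((cmod (D i N x))\<^sup>2) * indicator {0..1} x \<partial>lborel) \<longlonglongrightarrow> 0" if "i \<in> I" for i
    unfolding D_def using gpl gml by (cases "i < 3") simp_all
  have dl: "dlt psi \<longlonglongrightarrow> 0" by (rule dlt_tendsto[OF l2])
  have lt: "lone (\<lambda>n. fst (trunc N psi n))" "lone (\<lambda>n. snd (trunc N psi n))" for N
    by (rule trunc_lone, simp)+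
  have AEp: "AE x in lborel. Ep l1 l2 Phi th z gp gm x = 0"
  proof (rule lemC[OF fin _ Dm Dp Dl, where Fs="\<lambda>N. Ep l1 l2 Phi th z (tpoly N f) (tpoly N g)" and K=2 and \<delta>="dlt psi" and c=c])
    show "(\<lambda>x. Ep l1 l2 Phi th z gp gm x) \<in> borel_measurable borel" by (rule EpEm_meas(1)[OF gpm gmm])
    show "cmod (Ep l1 l2 Phi th z gp gm x - Ep l1 l2 Phi th z (tpoly N f) (tpoly N g) x) \<le> 2 * (\<Sum>i\<in>I. cmod (D i N (x + c i)))" for N x
      unfolding Ep_lin sumD using EpEm_bd(1)[OF l z] by simp
    show "cmod (Ep l1 l2 Phi th z (tpoly N f) (tpoly N g) x) \<le> dlt psi N" for N x
      unfolding tp lemB(1)[OF lt] using Rbound[OF l z eig, of fst] by simp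
  qed (use dl in auto)
  have AEm: "AE x in lborel. Em l1 l2 Phi th z gp gm x = 0"
  proof (rule lemC[OF fin _ Dm Dp Dl, where Fs="\<lambda>N. Em l1 l2 Phi th z (tpoly N f) (tpoly N g)" and K=2 and \<delta>="dlt psi" and c=c])
    show "(\<lambda>x. Em l1 l2 Phi th z gp gm x) \<in> borel_measurable borel" by (rule EpEm_meas(2)[OF gpm gmm])
    show "cmod (Em l1 l2 Phi th z gp gm x - Em l1 l2 Phi th z (tpoly N f) (tpoly N g) x) \<le> 2 * (\<Sum>i\<in>I. cmod (D i N (x + c i)))" for N x
      unfolding Em_lin sumD using EpEm_bd(2)[OF l z] by simp
    show "cmod (Em l1 l2 Phi th z (tpoly N f) (tpoly N g) x) \<le> dlt psi N" for N x
      unfolding tp lemB(2)[OF lt] using Rbound[OF l z eig, of snd] by simp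
  qed (use dl in auto)
  from AEp AEm show ?thesis by eventually_elim simp
qed



theorem theorem2p2:
  fixes l1 l2 Phi th :: real and z :: complex and psi :: "int \<Rightarrow> complex \<times> complex"
  assumes "0 \<le> l1" "l1 \<le> 1" "0 \<le> l2" "l2 \<le> 1"
    and "Phi \<notin> \<rat>"
    and "in_l2 psi"
    and "cmod z = 1"
    and "\<forall>n. UAMO l1 l2 Phi th psi n = (z * fst (psi n), z * snd (psi n))"
  shows "(\<forall>gp gm. is_inv_fourier_L2 (\<lambda>n. fst (psi n)) gp \<and> is_inv_fourier_L2 (\<lambda>n. snd (psi n)) gm \<longrightarrow>
            (AE xi in lborel. \<forall>n.
               UAMO_dual l1 l2 Phi xi (phi_seq Phi th gp gm xi) n
                 = (z * fst (phi_seq Phi th gp gm xi n), z * snd (phi_seq Phi th gp gm xi n))))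
       \<and> (in_l1 psi \<longrightarrow>
            (\<forall>xi. \<forall>n.
               UAMO_dual l1 l2 Phi xi
                  (phi_seq Phi th (inv_fourier (\<lambda>n. fst (psi n))) (inv_fourier (\<lambda>n. snd (psi n))) xi) n
                 = (z * fst (phi_seq Phi th (inv_fourier (\<lambda>n. fst (psi n))) (inv_fourier (\<lambda>n. snd (psi n))) xi n),
                    z * snd (phi_seq Phi th (inv_fourier (\<lambda>n. fst (psi n))) (inv_fourier (\<lambda>n. snd (psi n))) xi n))))"
proof (intro conjI allI impI)
  note l = assms(1-4)
  note z = assms(7)
  note eig = assms(8)
  have fin: "UAMO_dual l1 l2 Phi xi (phi_seq Phi th gp gm xi) n
         = (z * fst (phi_seq Phi th gp gm xi n), z * snd (phi_seq Phi th gp gm xi n))"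
    if "Ep l1 l2 Phi th z gp gm (of_int n * Phi + xi) = 0" "Em l1 l2 Phi th z gp gm (of_int n * Phi + xi) = 0"
    for gp gm xi n
    using lemA[of "of_int n * Phi + xi" n Phi xi l1 l2 th gp gm z] that by simp
  {
    fix gp gm
    assume "is_inv_fourier_L2 (\<lambda>n. fst (psi n)) gp \<and> is_inv_fourier_L2 (\<lambda>n. snd (psi n)) gm"
    then have AE: "AE x in lborel. Ep l1 l2 Phi th z gp gm x = 0 \<and> Em l1 l2 Phi th z gp gm x = 0"
      using L2part[OF l z eig assms(6)] by blast
    have "AE xi in lborel. Ep l1 l2 Phi th z gp gm (xi + of_int n * Phi) = 0 \<and> Em l1 l2 Phi th z gp gm (xi + of_int n * Phi) = 0" for n :: int
      by (rule AE_shift[OF AE])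
    then have "AE xi in lborel. \<forall>n::int. Ep l1 l2 Phi th z gp gm (xi + of_int n * Phi) = 0 \<and> Em l1 l2 Phi th z gp gm (xi + of_int n * Phi) = 0"
      unfolding AE_all_countable by blast
    then show "AE xi in lborel. \<forall>n.
               UAMO_dual l1 l2 Phi xi (phi_seq Phi th gp gm xi) n
                 = (z * fst (phi_seq Phi th gp gm xi n), z * snd (phi_seq Phi th gp gm xi n))"
    proof eventually_elim
      case (elim xi)
      show ?case using fin elim by (simp add: add.commute)
    qed
  }
  {
    fix xi n
    assume l1': "in_l1 psi"
    have lf: "lone (\<lambda>n. fst (psi n))" and lg: "lone (\<lambda>n. snd (psi n))"
      using l1' unfolding in_l1_def lone_def
      by (auto intro: summable_on_comparison_test)
    have z0: "inv_fourier (\<lambda>n. 0) x = 0" for x unfolding inv_fourier_def by simp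
    show "UAMO_dual l1 l2 Phi xi
                  (phi_seq Phi th (inv_fourier (\<lambda>n. fst (psi n))) (inv_fourier (\<lambda>n. snd (psi n))) xi) n
                 = (z * fst (phi_seq Phi th (inv_fourier (\<lambda>n. fst (psi n))) (inv_fourier (\<lambda>n. snd (psi n))) xi n),
                    z * snd (phi_seq Phi th (inv_fourier (\<lambda>n. fst (psi n))) (inv_fourier (\<lambda>n. snd (psi n))) xi n))"
      by (rule fin) (simp_all add: lemB[OF lf lg] eig z0)
  }
qed


end
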